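(* Let the setting of the context hold, fix $x\in\mathcal{X}$, and assume $|g_t(z)|\le G$ for all $z$ and $t\in\{0,1\}$. Define $\epsilon_F(x):=\sum_t p(t\mid x)\,\epsilon_{F,t}(x)$ and $\epsilon_{CF}(x):=\sum_t p(1-t\mid x)\,\epsilon_{CF,t}(x)$. Then $$\epsilon_f(x)\le 2\big(G^2(\epsilon_F(x)+\epsilon_{CF}(x))-\mathbb{V}_Y(x)\big),$$ where $\mathbb{V}_Y(x):=\mathbb{E}_{q(z\mid x)}\sum_t\mathbb{E}_{p_{Y(t)\mid\mathbb{P}_t}(y\mid z)}(y-j_t(z))^2$.
   Context: Binary treatment $T\in\{0,1\}$, covariates $X\in\mathcal{X}$, real-valued potential outcomes $Y(t)$, observed $Y=Y(T)$, observational distribution $p(x,y,t)$, exchangeability $Y(t)\perp T\mid X$. Data generating assumption: $Y=f^*(\mathbb{M}(X),T)+e$ with $e$ zero-mean exogenous noise, and $\mathbb{E}(Y(t)\mid X)=j_t(\mathbb{P}_t(X))$ for functions $\mathbb{P}_t$ and injective $j_t$, where $Y(t)\perp X\mid\mathbb{P}_t(X)$; $p_{Y(t)\mid\mathbb{P}_t}(y\mid P)$ denotes the conditional density of $Y(t)$ given $\mathbb{P}_t(X)=P$. Let $f_t,g_t$ be functions of $z$ and $q_\phi(z\mid x,y,t)$ a conditional density; $q_t(z\mid x):=\mathbb{E}_{p(y\mid x,t)}q_\phi(z\mid x,y,t)$, $q(z\mid x):=\mathbb{E}_{p(y,t\mid x)}q_\phi(z\mid x,y,t)$. Define $\mathcal{L}_f(z,t):=g_t(z)^{-2}\int(y-f_t(z))^2p_{Y(t)\mid\mathbb{P}_t}(y\mid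 z)\,dy$, $\epsilon_{F,t}(x):=\mathbb{E}_{q_t(z\mid x)}\mathcal{L}_f(z,t)$, $\epsilon_{CF,t}(x):=\mathbb{E}_{q_{1-t}(z\mid x)}\mathcal{L}_f(z,t)$, and $\epsilon_f(x):=\mathbb{E}_{q(z\mid x)}\big((f_1(z)-f_0(z))-(j_1(z)-j_0(z))\big)^2$. *)

theory Defs
  imports "HOL-Analysis.Analysis"
begin

text \<open>Treatments are naturals t in {0,1}. The latent space is a measure
space M on a type 'z; all conditional densities over z are densities w.r.t. M, and all
densities over the real outcome y are densities w.r.t. lborel.
  pTX x t          = p(t | x)
  pYXT x t y       = p(y | x, t)
  qphi z x y t     = q_phi(z | x, y, t)
  pYP t z y        = p_{Y(t) | P_t}(y | z)\<close>

definition qt :: "('x \<Rightarrow> nat \<Rightarrow> real \<Rightarrow> real) \<Rightarrow> ('z \<Rightarrow> 'x \<Rightarrow> real \<Rightarrow> nat \<Rightarrow> real)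
    \<Rightarrow> 'x \<Rightarrow> nat \<Rightarrow> 'z \<Rightarrow> real" where
  "qt pYXT qphi x t z = (\<integral>y. pYXT x t y * qphi z x y t \<partial>lborel)"

text \<open>q(z|x) = E_{p(y,t|x)} q_phi(z|x,y,t) with p(y,t|x) = p(t|x) p(y|x,t).\<close>
definition qmix :: "('x \<Rightarrow> nat \<Rightarrow> real) \<Rightarrow> ('x \<Rightarrow> nat \<Rightarrow> real \<Rightarrow> real)
    \<Rightarrow> ('z \<Rightarrow> 'x \<Rightarrow> real \<Rightarrow> nat \<Rightarrow> real) \<Rightarrow> 'x \<Rightarrow> 'z \<Rightarrow> real" where
  "qmix pTX pYXT qphi x z = (\<Sum>t\<in>{0,1}. pTX x t * qt pYXT qphi x t z)"

definition Lf :: "(nat \<Rightarrow> 'z \<Rightarrow> real \<Rightarrow> real) \<Rightarrow> (nat \<Rightarrow> 'z \<Rightarrow> real) \<Rightarrow> (nat \<Rightarrow> 'z \<Rightarrow> real)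
    \<Rightarrow> 'z \<Rightarrow> nat \<Rightarrow> real" where
  "Lf pYP f g z t = inverse ((g t z)^2) * (\<integral>y. (y - f t z)^2 * pYP t z y \<partial>lborel)"

definition epsFt where
  "epsFt M pYXT qphi pYP f g x t = (\<integral>z. qt pYXT qphi x t z * Lf pYP f g z t \<partial>M)"

definition epsCFt where
  "epsCFt M pYXT qphi pYP f g x t = (\<integral>z. qt pYXT qphi x (1 - t) z * Lf pYP f g z t \<partial>M)"

definition epsf where
  "epsf M pTX pYXT qphi f j x =
     (\<integral>z. qmix pTX pYXT qphi x z * ((f 1 z - f 0 z) - (j 1 z - j 0 z))^2 \<partial>M)"

definition epsF where
  "epsF M pTX pYXT qphi pYP f g x = (\<Sum>t\<in>{0::nat,1}. pTX x t * epsFt M pYXT qphi pYP f g x t)"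

definition epsCF where
  "epsCF M pTX pYXT qphi pYP f g x = (\<Sum>t\<in>{0::nat,1}. pTX x (1 - t) * epsCFt M pYXT qphi pYP f g x t)"

definition VY where
  "VY M pTX pYXT qphi pYP j x =
     (\<integral>z. qmix pTX pYXT qphi x z *
          (\<Sum>t\<in>{0::nat,1}. (\<integral>y. (y - j t z)^2 * pYP t z y \<partial>lborel)) \<partial>M)"

end

theory Submission
  imports Defs
begin

lemma sq_int:
  fixes p :: "real \<Rightarrow> real"
  assumes i0: "integrable lborel p" and i1: "integrable lborel (\<lambda>y. y * p y)"
    and i2: "integrable lborel (\<lambda>y. y^2 * p y)"
    and n0: "(\<integral>y. p y \<partial>lborel) = 1" and n1: "(\<integral>y. y * p y \<partial>lborel) = m"
  shows "(\<integral>y. (y - c)^2 * p y \<partial>lborel) = (\<integral>y. y^2 * p y \<partial>lborel) - 2*c*m + c^2"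
proof -
  have e: "(\<lambda>y. (y - c)^2 * p y) = (\<lambda>y. (y^2 * p y - (2*c) * (y * p y)) + c^2 * p y)"
    by (auto simp: power2_eq_square algebra_simps)
  show ?thesis unfolding e
    using i0 i1 i2 n0 n1 by (simp add: integral_add integral_diff)
qed

lemma sq_int_integrable:
  fixes p :: "real \<Rightarrow> real"
  assumes i0: "integrable lborel p" and i1: "integrable lborel (\<lambda>y. y * p y)"
    and i2: "integrable lborel (\<lambda>y. y^2 * p y)"
  shows "integrable lborel (\<lambda>y. (y - c)^2 * p y)"
proof -
  have e: "(\<lambda>y. (y - c)^2 * p y) = (\<lambda>y. (y^2 * p y - (2*c) * (y * p y)) + c^2 * p y)"
    by (auto simp: power2_eq_square algebra_simps)
  show ?thesis unfolding e using i0 i1 i2 by simp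
qed

theorem lemma3:
  fixes M :: "'z measure" and x :: 'x
    and pTX :: "'x \<Rightarrow> nat \<Rightarrow> real"
    and pYXT :: "'x \<Rightarrow> nat \<Rightarrow> real \<Rightarrow> real"
    and qphi :: "'z \<Rightarrow> 'x \<Rightarrow> real \<Rightarrow> nat \<Rightarrow> real"
    and pYP :: "nat \<Rightarrow> 'z \<Rightarrow> real \<Rightarrow> real"
    and f g j :: "nat \<Rightarrow> 'z \<Rightarrow> real" and G :: real
  assumes pT_nonneg: "\<forall>t\<in>{0,1}. pTX x t \<ge> 0"
    and pT_sum: "pTX x 0 + pTX x 1 = 1"
    and pYXT_density: "\<forall>t\<in>{0,1}. (\<forall>y. pYXT x t y \<ge> 0) \<and> integrable lborel (pYXT x t)
                          \<and> (\<integral>y. pYXT x t y \<partial>lborel) = 1"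
    and qphi_density: "\<forall>t\<in>{0,1}. \<forall>y. (\<forall>z\<in>space M. qphi z x y t \<ge> 0)
                          \<and> integrable M (\<lambda>z. qphi z x y t) \<and> (\<integral>z. qphi z x y t \<partial>M) = 1"
    and pYP_density: "\<forall>t\<in>{0,1}. \<forall>z\<in>space M. (\<forall>y. pYP t z y \<ge> 0)
                          \<and> integrable lborel (pYP t z) \<and> (\<integral>y. pYP t z y \<partial>lborel) = 1
                          \<and> integrable lborel (\<lambda>y. y^2 * pYP t z y)"
    and pYP_mean: "\<forall>t\<in>{0,1}. \<forall>z\<in>space M. integrable lborel (\<lambda>y. y * pYP t z y)
                          \<and> (\<integral>y. y * pYP t z y \<partial>lborel) = j t z"
    and j_inj: "\<forall>t\<in>{0,1}. inj_on (j t) (space M)"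
    and g_bound: "\<forall>t\<in>{0,1}. \<forall>z. \<bar>g t z\<bar> \<le> G"
    and g_nonzero: "\<forall>t\<in>{0,1}. \<forall>z. g t z \<noteq> 0"
    and int_L: "\<forall>t\<in>{0,1}. \<forall>t'\<in>{0,1}.
                  integrable M (\<lambda>z. qt pYXT qphi x t' z * Lf pYP f g z t)"
    and int_V: "integrable M (\<lambda>z. qmix pTX pYXT qphi x z *
                  (\<Sum>t\<in>{0::nat,1}. (\<integral>y. (y - j t z)^2 * pYP t z y \<partial>lborel)))"
    and int_f: "integrable M (\<lambda>z. qmix pTX pYXT qphi x z *
                  ((f 1 z - f 0 z) - (j 1 z - j 0 z))^2)"
  shows "epsf M pTX pYXT qphi f j x
           \<le> 2 * (G^2 * (epsF M pTX pYXT qphi pYP f g x + epsCF M pTX pYXT qphi pYP f g x)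
                  - VY M pTX pYXT qphi pYP j x)"
proof -
  define L where "L = (\<lambda>z t. Lf pYP f g z t)"
  define q where "q = (\<lambda>t z. qt pYXT qphi x t z)"
  define Q where "Q = (\<lambda>z. qmix pTX pYXT qphi x z)"
  define V where "V = (\<lambda>z. (\<Sum>t\<in>{0::nat,1}. (\<integral>y. (y - j t z)^2 * pYP t z y \<partial>lborel)))"
  define D where "D = (\<lambda>z. ((f 1 z - f 0 z) - (j 1 z - j 0 z))^2)"
  have Qeq: "Q z = pTX x 0 * q 0 z + pTX x 1 * q 1 z" for z
    unfolding Q_def q_def qmix_def by simp
  have qnn: "q t z \<ge> 0" if "t \<in> {0,1}" "z \<in> space M" for t z
    unfolding q_def qt_def using that pYXT_density qphi_density
    by (intro integral_nonneg_AE) (auto intro!: mult_nonneg_nonneg)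
  have Qnn: "Q z \<ge> 0" if "z \<in> space M" for z
    unfolding Qeq using qnn[OF _ that] pT_nonneg by auto
  have Gsq: "g t z ^ 2 \<le> G^2" "g t z ^ 2 > 0" if "t \<in> {0,1}" for t z
  proof -
    have "\<bar>g t z\<bar> \<le> G" "g t z \<noteq> 0" using g_bound g_nonzero that by auto
    then have "\<bar>g t z\<bar>^2 \<le> G^2" by (intro power_mono) auto
    then show "g t z ^ 2 \<le> G^2" by simp
    show "g t z ^ 2 > 0" using \<open>g t z \<noteq> 0\<close> by simp
  qed
  have pt: "G^2 * L z t \<ge> (\<integral>y. (y - j t z)^2 * pYP t z y \<partial>lborel) + (f t z - j t z)^2"
    if t: "t \<in> {0,1}" and z: "z \<in> space M" for t z
  proof -
    have d: "integrable lborel (pYP t z)" "(\<integral>y. pYP t z y \<partial>lborel) = 1"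
      "integrable lborel (\<lambda>y. y^2 * pYP t z y)" "\<forall>y. pYP t z y \<ge> 0"
      using pYP_density t z by auto
    have m: "integrable lborel (\<lambda>y. y * pYP t z y)" "(\<integral>y. y * pYP t z y \<partial>lborel) = j t z"
      using pYP_mean t z by auto
    define I where "I = (\<integral>y. (y - f t z)^2 * pYP t z y \<partial>lborel)"
    have Inn: "I \<ge> 0" unfolding I_def using d by (intro integral_nonneg_AE) auto
    have Ieq: "I = (\<integral>y. (y - j t z)^2 * pYP t z y \<partial>lborel) + (f t z - j t z)^2"
      unfolding I_def using sq_int[OF d(1) m(1) d(3) d(2) m(2), of "f t z"]
        sq_int[OF d(1) m(1) d(3) d(2) m(2), of "j t z"]
      by (simp only:) (simp add: power2_eq_square algebra_simps)
    have "I \<le> G^2 * L z t"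
    proof -
      have "L z t = I / (g t z)^2" unfolding L_def Lf_def I_def by (simp add: divide_inverse)
      moreover have "I \<le> G^2 * (I / (g t z)^2)"
      proof -
        have "I = (g t z)^2 * (I / (g t z)^2)" using Gsq(2)[OF t] by simp
        also have "\<dots> \<le> G^2 * (I / (g t z)^2)"
          using Gsq[OF t] Inn by (intro mult_right_mono) auto
        finally show ?thesis .
      qed
      ultimately show ?thesis by simp
    qed
    then show ?thesis using Ieq by simp
  qed
  have ptw: "Q z * D z \<le> 2 * (G^2 * (Q z * (L z 0 + L z 1)) - Q z * V z)"
    if z: "z \<in> space M" for z
  proof -
    have a: "D z \<le> 2 * ((f 0 z - j 0 z)^2 + (f 1 z - j 1 z)^2)"
    proof -
      have "0 \<le> ((f 0 z - j 0 z) + (f 1 z - j 1 z))^2" by simp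
      then show ?thesis unfolding D_def by (simp add: power2_eq_square algebra_simps)
    qed
    have b: "V z + (f 0 z - j 0 z)^2 + (f 1 z - j 1 z)^2 \<le> G^2 * (L z 0 + L z 1)"
      using pt[of 0 z] pt[of 1 z] z unfolding V_def by (simp add: algebra_simps)
    have "D z \<le> 2 * (G^2 * (L z 0 + L z 1) - V z)" using a b by argo
    from mult_left_mono[OF this Qnn[OF z]] show ?thesis by (simp add: algebra_simps)
  qed
  have iL: "integrable M (\<lambda>z. q t' z * L z t)" if "t \<in> {0,1}" "t' \<in> {0,1}" for t t'
    using int_L that unfolding q_def L_def by auto
  have iV: "integrable M (\<lambda>z. Q z * V z)" using int_V unfolding Q_def V_def .
  have iD: "integrable M (\<lambda>z. Q z * D z)" using int_f unfolding Q_def D_def .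
  have QLeq: "(\<lambda>z. Q z * (L z 0 + L z 1)) = (\<lambda>z. pTX x 0 * (q 0 z * L z 0) + pTX x 1 * (q 1 z * L z 1)
      + pTX x 1 * (q 1 z * L z 0) + pTX x 0 * (q 0 z * L z 1))"
    unfolding Qeq by (auto simp: algebra_simps)
  have iQL: "integrable M (\<lambda>z. Q z * (L z 0 + L z 1))"
    unfolding QLeq using iL by auto
  have intQL: "(\<integral>z. Q z * (L z 0 + L z 1) \<partial>M) = epsF M pTX pYXT qphi pYP f g x + epsCF M pTX pYXT qphi pYP f g x"
    unfolding QLeq epsF_def epsCF_def epsFt_def epsCFt_def
    using iL by (simp add: q_def L_def)
  have "epsf M pTX pYXT qphi f j x = (\<integral>z. Q z * D z \<partial>M)"
    unfolding epsf_def Q_def D_def ..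
  also have "\<dots> \<le> (\<integral>z. 2 * (G^2 * (Q z * (L z 0 + L z 1)) - Q z * V z) \<partial>M)"
    using iD iQL iV ptw by (intro integral_mono) auto
  also have "\<dots> = 2 * (G^2 * (\<integral>z. Q z * (L z 0 + L z 1) \<partial>M) - (\<integral>z. Q z * V z \<partial>M))"
    using iQL iV by simp
  also have "\<dots> = 2 * (G^2 * (epsF M pTX pYXT qphi pYP f g x + epsCF M pTX pYXT qphi pYP f g x)
                  - VY M pTX pYXT qphi pYP j x)"
    unfolding intQL VY_def by (simp add: Q_def V_def)
  finally show ?thesis .
qed

end
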